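(* Let $-\frac1n<\alpha<0$, $\beta_1\ge0$, $\beta_2\in\mathbb{R}$, and let $f=(1-\alpha\varphi)^{1/\alpha}\in\mathcal{C}^+_\alpha(\mathbb{R}^n)$ with $o\in\mathrm{int}(K_f)$. For $t>0$ small, let $\widehat{f_t}=\big(1-\alpha[(1+\beta_1t)\varphi^*]^*+\alpha\beta_2t\big)^{1/\alpha}$ and, for $u\in S^{n-1}$, $$E_t(u)=\int_0^{+\infty}\frac{\widehat{f_t}(ru)-f(ru)}{t}\,r^{n-1}\,dr.$$ Then $\lim_{t\to0^+}E_t(u)$ exists for almost every $u\in S^{n-1}$, and $$\lim_{t\to0^+}\int_{S^{n-1}}E_t(u)\,du=\int_{S^{n-1}}\lim_{t\to0^+}E_t(u)\,du .$$
   Context: $\mathrm{Conv}(\mathbb{R}^n)$ is the set of proper, convex, lower semi-continuous $\varphi:\mathbb{R}^n\to\mathbb{R}\cup\{+\infty\}$; $\varphi$ is coercive if $\liminf_{|x|\to\infty}\varphi(x)/|x|>0$. For $\alpha<0$, $\mathcal{C}^+_\alpha(\mathbb{R}^n)$ is the set of $f=(1-\alpha\varphi)^{1/\alpha}$ with $\varphi\in\mathrm{Conv}(\mathbb{R}^n)$ nonnegative and coercive (convention: $f=0$ where $\varphi=+\infty$). $K_f=\overline{\mathrm{dom}\,\varphi}$. $\varphi^*$ denotes the Legendre transform, so $[(1+s)\varphi^*]^*(x)=(1+s)\varphi(x/(1+s))$ for $s>-1$. $du$ is the surface measure on the unit sphere $S^{n-1}$. *)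

theory Defs
  imports "HOL-Analysis.Analysis"
begin

definition edom :: "('a \<Rightarrow> ereal) \<Rightarrow> 'a set" where
  "edom \<phi> = {x. \<phi> x \<noteq> \<infinity>}"

definition proper_fn :: "('a \<Rightarrow> ereal) \<Rightarrow> bool" where
  "proper_fn \<phi> \<longleftrightarrow> (\<forall>x. \<phi> x \<noteq> -\<infinity>) \<and> (\<exists>x. \<phi> x \<noteq> \<infinity>)"

definition convex_efn :: "('a::real_vector \<Rightarrow> ereal) \<Rightarrow> bool" where
  "convex_efn \<phi> \<longleftrightarrow> convex_on (edom \<phi>) (\<lambda>x. real_of_ereal (\<phi> x))"

definition lsc_fn :: "('a::topological_space \<Rightarrow> ereal) \<Rightarrow> bool" where
  "lsc_fn \<phi> \<longleftrightarrow> (\<forall>x. \<phi> x \<le> Liminf (at x) \<phi>)"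

definition Conv :: "('a::euclidean_space \<Rightarrow> ereal) set" where
  "Conv = {\<phi>. proper_fn \<phi> \<and> convex_efn \<phi> \<and> lsc_fn \<phi>}"

definition coercive :: "('a::real_normed_vector \<Rightarrow> ereal) \<Rightarrow> bool" where
  "coercive \<phi> \<longleftrightarrow> Liminf at_infinity (\<lambda>x. \<phi> x / ereal (norm x)) > 0"

definition legendre :: "('a::real_inner \<Rightarrow> ereal) \<Rightarrow> 'a \<Rightarrow> ereal" where
  "legendre \<phi> y = (SUP x. ereal (inner x y) - \<phi> x)"

definition alpha_fn :: "real \<Rightarrow> ('a \<Rightarrow> ereal) \<Rightarrow> 'a \<Rightarrow> real" where
  "alpha_fn \<alpha> \<psi> x = (if \<psi> x = \<infinity> then 0
      else (1 - \<alpha> * real_of_ereal (\<psi> x)) powr (1 / \<alpha>))"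

definition C_alpha_plus :: "real \<Rightarrow> ('a::euclidean_space \<Rightarrow> real) set" where
  "C_alpha_plus \<alpha> = {alpha_fn \<alpha> \<phi> | \<phi>. \<phi> \<in> Conv \<and> (\<forall>x. \<phi> x \<ge> 0) \<and> coercive \<phi>}"

definition Kset :: "('a::topological_space \<Rightarrow> ereal) \<Rightarrow> 'a set" where
  "Kset \<phi> = closure (edom \<phi>)"

definition hat_f :: "real \<Rightarrow> real \<Rightarrow> real \<Rightarrow> ('a::euclidean_space \<Rightarrow> ereal) \<Rightarrow> real \<Rightarrow> 'a \<Rightarrow> real" where
  "hat_f \<alpha> \<beta>1 \<beta>2 \<phi> t = alpha_fn \<alpha>
     (\<lambda>x. legendre (\<lambda>y. ereal (1 + \<beta>1 * t) * legendre \<phi> y) x - ereal (\<beta>2 * t))"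

text \<open>Surface (Hausdorff) measure on the unit sphere, defined by the cone-volume formula
  sigma(A) = n * vol {r u. 0 <= r <= 1, u in A}, i.e. the push-forward of n times
  Lebesgue measure on the unit ball under radial projection.\<close>
definition sphere_measure :: "'a::euclidean_space measure" where
  "sphere_measure = distr (density (restrict_space lborel (ball 0 1)) (\<lambda>_. ennreal (real DIM('a))))
      (restrict_space borel (sphere 0 1)) (\<lambda>x. x /\<^sub>R norm x)"

definition E_fn :: "real \<Rightarrow> real \<Rightarrow> real \<Rightarrow> ('a::euclidean_space \<Rightarrow> ereal) \<Rightarrow> real \<Rightarrow> 'a \<Rightarrow> real" where
  "E_fn \<alpha> \<beta>1 \<beta>2 \<phi> t u = (LBINT r:{0<..}.
     (hat_f \<alpha> \<beta>1 \<beta>2 \<phi> t (r *\<^sub>R u) - alpha_fn \<alpha> \<phi> (r *\<^sub>R u)) / t * r ^ (DIM('a) - 1))"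

end

theory Submission
  imports Defs
begin

lemma lsc_nbhd:
  fixes \<phi> :: "'a::metric_space \<Rightarrow> ereal"
  assumes "lsc_fn \<phi>" "m < \<phi> x"
  shows "\<exists>d>0. \<forall>z. dist z x < d \<longrightarrow> m < \<phi> z"
proof -
  have "m < Liminf (at x) \<phi>" using assms unfolding lsc_fn_def by (meson order_less_le_trans)
  then have "eventually (\<lambda>z. m < \<phi> z) (at x)" by (rule less_LiminfD)
  then obtain d where d: "d > 0" "\<And>z. z \<noteq> x \<Longrightarrow> dist z x < d \<Longrightarrow> m < \<phi> z"
    unfolding eventually_at by auto
  show ?thesis using d assms(2) by (metis)
qed

lemma lsc_borel:
  fixes \<phi> :: "'a::{metric_space,second_countable_topology} \<Rightarrow> ereal"
  assumes "lsc_fn \<phi>"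
  shows "\<phi> \<in> borel_measurable borel"
proof (rule borel_measurableI_greater)
  fix y
  have "open {x. y < \<phi> x}"
    unfolding open_dist using lsc_nbhd[OF assms] by auto
  then show "{x \<in> space borel. y < \<phi> x} \<in> sets borel" by auto
qed


lemma ereal_fin: "0 \<le> (e::ereal) \<Longrightarrow> e \<noteq> \<infinity> \<Longrightarrow> e = ereal (real_of_ereal e)"
  by (cases e) auto

lemma ereal_fin2: "0 \<le> (e::ereal) \<Longrightarrow> e \<le> ereal m \<Longrightarrow> e = ereal (real_of_ereal e) \<and> real_of_ereal e \<le> m"
  by (cases e) auto

lemma epi_convex:
  fixes \<phi> :: "'a::euclidean_space \<Rightarrow> ereal"
  assumes "\<phi> \<in> Conv" "\<forall>x. \<phi> x \<ge> 0"
  shows "convex {p::'a\<times>real. \<phi> (fst p) \<le> ereal (snd p)}"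
proof -
  have cv: "convex_on (edom \<phi>) (\<lambda>x. real_of_ereal (\<phi> x))"
    using assms unfolding Conv_def convex_efn_def by auto
  then have ce: "convex (edom \<phi>)" unfolding convex_on_def by auto
  show ?thesis unfolding convex_def
  proof (intro allI impI ballI)
    fix p q :: "'a\<times>real" and u v :: real
    assume p: "p \<in> {p. \<phi> (fst p) \<le> ereal (snd p)}" and q: "q \<in> {p. \<phi> (fst p) \<le> ereal (snd p)}"
      and uv: "0 \<le> u" "0 \<le> v" "u + v = 1"
    have pd: "fst p \<in> edom \<phi>" "fst q \<in> edom \<phi>" using p q by (auto simp: edom_def)
    have rp: "real_of_ereal (\<phi> (fst p)) \<le> snd p" using p assms(2) ereal_fin2 by auto
    have rq: "real_of_ereal (\<phi> (fst q)) \<le> snd q" using q assms(2) ereal_fin2 by auto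
    let ?z = "u *\<^sub>R fst p + v *\<^sub>R fst q"
    have zd: "?z \<in> edom \<phi>" using ce pd uv unfolding convex_def by auto
    have fz: "\<phi> ?z = ereal (real_of_ereal (\<phi> ?z))"
      using zd assms(2) ereal_fin unfolding edom_def by auto
    have "real_of_ereal (\<phi> ?z) \<le> u * real_of_ereal (\<phi> (fst p)) + v * real_of_ereal (\<phi> (fst q))"
      using cv pd uv unfolding convex_on_def by auto
    also have "\<dots> \<le> u * snd p + v * snd q"
      using rp rq uv by (intro add_mono mult_left_mono) auto
    finally have rz: "real_of_ereal (\<phi> ?z) \<le> u * snd p + v * snd q" .
    then show "u *\<^sub>R p + v *\<^sub>R q \<in> {p. \<phi> (fst p) \<le> ereal (snd p)}"
    proof -
      have "\<phi> ?z \<le> ereal (u * snd p + v * snd q)" using fz rz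
        by (metis ereal_less_eq(3))
      then show ?thesis by simp
    qed
  qed
qed

lemma epi_closed:
  fixes \<phi> :: "'a::euclidean_space \<Rightarrow> ereal"
  assumes "lsc_fn \<phi>"
  shows "closed {p::'a\<times>real. \<phi> (fst p) \<le> ereal (snd p)}"
proof -
  have "open (- {p::'a\<times>real. \<phi> (fst p) \<le> ereal (snd p)})"
    unfolding open_dist
  proof (intro ballI)
    fix p :: "'a\<times>real" assume "p \<in> - {p. \<phi> (fst p) \<le> ereal (snd p)}"
    then have lt: "ereal (snd p) < \<phi> (fst p)" by auto
    then obtain m where m: "snd p < m" "ereal m < \<phi> (fst p)"
    proof (cases "\<phi> (fst p)")
      case (real r) then show ?thesis using that lt by (intro that[of "(snd p + r)/2"]) auto
    next
      case PInf then show ?thesis using that by (intro that[of "snd p + 1"]) auto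
    next
      case MInf then show ?thesis using lt by auto
    qed
    obtain d where d: "d > 0" "\<And>z. dist z (fst p) < d \<Longrightarrow> ereal m < \<phi> z"
      using lsc_nbhd[OF assms m(2)] by auto
    show "\<exists>e>0. \<forall>y. dist y p < e \<longrightarrow> y \<in> - {p. \<phi> (fst p) \<le> ereal (snd p)}"
    proof (intro exI[of _ "min d (m - snd p)"] conjI allI impI)
      show "0 < min d (m - snd p)" using d m by auto
      fix y :: "'a\<times>real" assume y: "dist y p < min d (m - snd p)"
      have "dist (fst y) (fst p) < d" using y dist_fst_le[of y p] by linarith
      then have a: "ereal m < \<phi> (fst y)" using d by auto
      have "dist (snd y) (snd p) < m - snd p" using y dist_snd_le[of y p] by linarith
      then have "snd y < m" by (auto simp: dist_real_def)
      then show "y \<in> - {p. \<phi> (fst p) \<le> ereal (snd p)}" using a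
      proof (auto)
        assume "\<phi> (fst y) \<le> ereal (snd y)"
        then have "\<phi> (fst y) < ereal m" using \<open>snd y < m\<close> by (meson ereal_less_eq(3) le_less_trans less_ereal.simps(1))
        then show False using a by auto
      qed
    qed
  qed
  then show ?thesis by (simp add: closed_def)
qed


lemma minorant:
  fixes \<phi> :: "'a::euclidean_space \<Rightarrow> ereal"
  assumes "\<phi> \<in> Conv" "\<forall>x. \<phi> x \<ge> 0" "ereal a < \<phi> x0"
  shows "\<exists>Y B. (\<forall>z. ereal (inner z Y - B) \<le> \<phi> z) \<and> a < inner x0 Y - B"
proof -
  define E where "E = {p::'a\<times>real. \<phi> (fst p) \<le> ereal (snd p)}"
  have "convex E" unfolding E_def by (rule epi_convex[OF assms(1,2)])
  moreover have "closed E" unfolding E_def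
    by (rule epi_closed) (use assms(1) in \<open>auto simp: Conv_def\<close>)
  moreover have "(x0, a) \<notin> E" using assms(3) by (auto simp: E_def)
  ultimately obtain w b where wb: "inner w (x0, a) < b" "\<forall>p\<in>E. inner w p > b"
    using separating_hyperplane_closed_point by blast
  obtain y l where w: "w = (y, l)" by (cases w)
  have wb1: "inner y x0 + l * a < b" using wb(1) w by (simp add: inner_Pair)
  have wb2: "\<And>z m. \<phi> z \<le> ereal m \<Longrightarrow> inner y z + l * m > b"
    using wb(2) w by (auto simp: E_def inner_Pair)
  obtain z1 where z1: "\<phi> z1 \<noteq> \<infinity>" using assms(1) by (auto simp: Conv_def proper_fn_def)
  define m1 where "m1 = real_of_ereal (\<phi> z1)"
  have fz1: "\<phi> z1 = ereal m1" unfolding m1_def using z1 assms(2) ereal_fin by auto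
  have l0: "l \<ge> 0"
  proof (rule ccontr)
    assume "\<not> l \<ge> 0"
    then have ln: "l < 0" by simp
    define m where "m = max m1 ((b - inner y z1) / l)"
    have "\<phi> z1 \<le> ereal m" using fz1 by (simp add: m_def)
    then have "inner y z1 + l * m > b" by (rule wb2)
    moreover have "l * m \<le> l * ((b - inner y z1) / l)"
      using ln by (intro mult_left_mono_neg) (auto simp: m_def)
    moreover have "l * ((b - inner y z1) / l) = b - inner y z1" using ln by simp
    ultimately show False by linarith
  qed
  show ?thesis
  proof (cases "l = 0")
    case False
    then have lp: "l > 0" using l0 by simp
    show ?thesis
    proof (intro exI[of _ "- y /\<^sub>R l"] exI[of _ "- b / l"] conjI allI)
      fix z
      show "ereal (inner z (- y /\<^sub>R l) - - b / l) \<le> \<phi> z"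
      proof (cases "\<phi> z = \<infinity>")
        case False
        define m where "m = real_of_ereal (\<phi> z)"
        have fz: "\<phi> z = ereal m" unfolding m_def using False assms(2) ereal_fin by auto
        have "inner y z + l * m > b" using fz wb2 by simp
        then have "inner z (- y /\<^sub>R l) - - b / l \<le> m"
          using lp by (simp add: field_simps inner_commute)
        then show ?thesis using fz by simp
      qed simp
    next
      show "a < inner x0 (- y /\<^sub>R l) - - b / l"
        using wb1 lp by (simp add: field_simps inner_commute)
    qed
  next
    case True
    have d: "b - inner y x0 > 0" using wb1 True by simp
    define k where "k = (\<bar>a\<bar> + 1) / (b - inner y x0)"
    have kp: "k > 0" using d by (simp add: k_def)
    show ?thesis
    proof (intro exI[of _ "- k *\<^sub>R y"] exI[of _ "- k * b"] conjI allI)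
      fix z
      show "ereal (inner z (- k *\<^sub>R y) - - k * b) \<le> \<phi> z"
      proof (cases "\<phi> z = \<infinity>")
        case False
        define m where "m = real_of_ereal (\<phi> z)"
        have fz: "\<phi> z = ereal m" unfolding m_def using False assms(2) ereal_fin by auto
        have "inner y z > b" using fz wb2[of z m] True by simp
        then have "k * (b - inner y z) \<le> 0"
          using kp by (simp add: mult_nonneg_nonpos)
        moreover have "inner z (- k *\<^sub>R y) - - k * b = k * (b - inner y z)"
          by (simp add: inner_commute algebra_simps)
        ultimately have "ereal (inner z (- k *\<^sub>R y) - - k * b) \<le> 0" by simp
        moreover have "0 \<le> \<phi> z" using assms(2) by auto
        ultimately show ?thesis by (rule order.trans)
      qed simp
    next
      have "inner x0 (- k *\<^sub>R y) - - k * b = k * (b - inner y x0)"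
        by (simp add: inner_commute algebra_simps)
      also have "\<dots> = \<bar>a\<bar> + 1" using d by (simp add: k_def)
      finally show "a < inner x0 (- k *\<^sub>R y) - - k * b" by simp
    qed
  qed
qed


lemma legendre_scale:
  fixes \<phi> :: "'a::euclidean_space \<Rightarrow> ereal"
  assumes "\<phi> \<in> Conv" "\<forall>x. \<phi> x \<ge> 0" "c > 0"
  shows "legendre (\<lambda>y. ereal c * legendre \<phi> y) x = ereal c * \<phi> (x /\<^sub>R c)"
proof (rule antisym)
  show "legendre (\<lambda>y. ereal c * legendre \<phi> y) x \<le> ereal c * \<phi> (x /\<^sub>R c)"
    unfolding legendre_def[of "\<lambda>y. ereal c * legendre \<phi> y"]
  proof (rule SUP_least)
    fix y
    have up: "ereal (inner (x /\<^sub>R c) y) - \<phi> (x /\<^sub>R c) \<le> legendre \<phi> y"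
      unfolding legendre_def by (rule SUP_upper) simp
    show "ereal (inner y x) - ereal c * legendre \<phi> y \<le> ereal c * \<phi> (x /\<^sub>R c)"
    proof (cases "\<phi> (x /\<^sub>R c)")
      case (real v)
      show ?thesis
      proof (cases "legendre \<phi> y")
        case (real w)
        then have "inner (x /\<^sub>R c) y - v \<le> w" using up \<open>\<phi> (x /\<^sub>R c) = ereal v\<close> by simp
        then have "inner x y - c * v \<le> c * w" using assms(3) by (simp add: field_simps)
        then show ?thesis using real \<open>\<phi> (x /\<^sub>R c) = ereal v\<close> by (simp add: inner_commute)
      next
        case PInf then show ?thesis using assms(3) by simp
      next
        case MInf then show ?thesis using up \<open>\<phi> (x /\<^sub>R c) = ereal v\<close> by simp
      qed
    next
      case PInf then show ?thesis using assms(3) by simp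
    next
      case MInf
      moreover have "0 \<le> \<phi> (x /\<^sub>R c)" using assms(2) by blast
      ultimately show ?thesis by simp
    qed
  qed
next
  show "ereal c * \<phi> (x /\<^sub>R c) \<le> legendre (\<lambda>y. ereal c * legendre \<phi> y) x"
  proof (rule dense_le)
    fix e assume e: "e < ereal c * \<phi> (x /\<^sub>R c)"
    show "e \<le> legendre (\<lambda>y. ereal c * legendre \<phi> y) x"
    proof (cases e)
      case (real a)
      have "ereal (a / c) < \<phi> (x /\<^sub>R c)"
      proof (cases "\<phi> (x /\<^sub>R c)")
        case (real v) then show ?thesis using e \<open>e = ereal a\<close> assms(3) by (simp add: field_simps)
      qed (use assms(2) in \<open>auto\<close>)
      from minorant[OF assms(1,2) this] obtain Y B where
        YB: "\<And>z. ereal (inner z Y - B) \<le> \<phi> z" "a / c < inner (x /\<^sub>R c) Y - B" by blast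
      have lY: "legendre \<phi> Y \<le> ereal B"
        unfolding legendre_def
      proof (rule SUP_least)
        fix z
        show "ereal (inner z Y) - \<phi> z \<le> ereal B"
          using YB(1)[of z] by (cases "\<phi> z") auto
      qed
      have "ereal (inner Y x - c * B) \<le> ereal (inner Y x) - ereal c * legendre \<phi> Y"
        using lY assms(3) by (cases "legendre \<phi> Y") auto
      also have "\<dots> \<le> legendre (\<lambda>y. ereal c * legendre \<phi> y) x"
        unfolding legendre_def[of "\<lambda>y. ereal c * legendre \<phi> y"] by (rule SUP_upper) simp
      finally have *: "ereal (inner Y x - c * B) \<le> legendre (\<lambda>y. ereal c * legendre \<phi> y) x" .
      have "a < inner Y x - c * B" using YB(2) assms(3) by (simp add: field_simps inner_commute)
      then show ?thesis using * \<open>e = ereal a\<close> by (meson ereal_less_eq(3) less_imp_le order.trans)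
    next
      case PInf then show ?thesis using e by simp
    qed simp
  qed
qed


lemma coercive_bound:
  fixes \<phi> :: "'a::euclidean_space \<Rightarrow> ereal"
  assumes "coercive \<phi>"
  shows "\<exists>c R. c > 0 \<and> R > 0 \<and> (\<forall>x. norm x \<ge> R \<longrightarrow> ereal (c * norm x) \<le> \<phi> x)"
proof -
  have L: "0 < Liminf at_infinity (\<lambda>x. \<phi> x / ereal (norm x))"
    using assms unfolding coercive_def by simp
  obtain z where z: "0 < z" "z < Liminf at_infinity (\<lambda>x. \<phi> x / ereal (norm x))"
    using dense[OF L] by blast
  obtain c where zc: "z = ereal c" using z by (cases z) auto
  have cp: "c > 0" using z zc by simp
  have "eventually (\<lambda>x. z < \<phi> x / ereal (norm x)) at_infinity"
    by (rule less_LiminfD[OF z(2)])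
  then obtain b where b: "\<And>x. norm x \<ge> b \<Longrightarrow> z < \<phi> x / ereal (norm x)"
    unfolding eventually_at_infinity by blast
  have "\<forall>x. norm x \<ge> max b 1 \<longrightarrow> ereal (c * norm x) \<le> \<phi> x"
  proof (intro allI impI)
    fix x :: 'a assume nx: "max b 1 \<le> norm x"
    then have lt: "ereal c < \<phi> x / ereal (norm x)" using b zc by auto
    have np: "norm x > 0" using nx by linarith
    show "ereal (c * norm x) \<le> \<phi> x"
    proof (cases "\<phi> x")
      case (real v)
      then have "c < v / norm x" using lt np by simp
      then have "c * norm x < v" using np by (simp add: field_simps)
      then show ?thesis using real by simp
    next
      case MInf then show ?thesis using lt np by simp
    qed simp
  qed
  then show ?thesis using cp by (intro exI[of _ c] exI[of _ "max b 1"]) auto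
qed


definition hfun :: "real \<Rightarrow> real \<Rightarrow> real" where
  "hfun \<alpha> v = (1 - \<alpha> * v) powr (1 / \<alpha>)"

definition kfun :: "real \<Rightarrow> real \<Rightarrow> real \<Rightarrow> nat \<Rightarrow> real \<Rightarrow> real \<Rightarrow> real" where
  "kfun \<alpha> \<beta>1 \<beta>2 n v t = (1 + \<beta>1 * t) ^ n * (1 - \<alpha> * ((1 + \<beta>1 * t) * v - \<beta>2 * t)) powr (1 / \<alpha>)"

definition kder :: "real \<Rightarrow> real \<Rightarrow> real \<Rightarrow> nat \<Rightarrow> real \<Rightarrow> real \<Rightarrow> real" where
  "kder \<alpha> \<beta>1 \<beta>2 n v t = real n * (1 + \<beta>1 * t) ^ (n - 1) * \<beta>1 * (1 - \<alpha> * ((1 + \<beta>1 * t) * v - \<beta>2 * t)) powr (1 / \<alpha>)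
     + (1 + \<beta>1 * t) ^ n * ((1 / \<alpha>) * (1 - \<alpha> * ((1 + \<beta>1 * t) * v - \<beta>2 * t)) powr (1 / \<alpha> - 1) * (- \<alpha> * (\<beta>1 * v - \<beta>2)))"

lemma kfun_deriv:
  assumes "1 - \<alpha> * ((1 + \<beta>1 * t) * v - \<beta>2 * t) > 0"
  shows "(kfun \<alpha> \<beta>1 \<beta>2 n v has_real_derivative kder \<alpha> \<beta>1 \<beta>2 n v t) (at t)"
  unfolding kfun_def[abs_def] kder_def
  using assms
  by (auto intro!: derivative_eq_intros simp: algebra_simps)


lemma kfun0: "kfun \<alpha> \<beta>1 \<beta>2 n v 0 = hfun \<alpha> v" by (simp add: kfun_def hfun_def)

lemma kfun_lim:
  assumes "\<alpha> < 0" "v \<ge> 0"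
  shows "((\<lambda>t. (kfun \<alpha> \<beta>1 \<beta>2 n v t - hfun \<alpha> v) / t) \<longlongrightarrow> kder \<alpha> \<beta>1 \<beta>2 n v 0) (at_right 0)"
proof -
  have "\<alpha> * v \<le> 0" using assms by (simp add: mult_nonpos_nonneg)
  then have "1 - \<alpha> * ((1 + \<beta>1 * 0) * v - \<beta>2 * 0) > 0" by simp
  from kfun_deriv[OF this, of n]
  have "((\<lambda>y. (kfun \<alpha> \<beta>1 \<beta>2 n v y - kfun \<alpha> \<beta>1 \<beta>2 n v 0) / (y - 0)) \<longlongrightarrow> kder \<alpha> \<beta>1 \<beta>2 n v 0) (at 0)"
    unfolding has_field_derivative_iff by simp
  then have "((\<lambda>y. (kfun \<alpha> \<beta>1 \<beta>2 n v y - kfun \<alpha> \<beta>1 \<beta>2 n v 0) / (y - 0)) \<longlongrightarrow> kder \<alpha> \<beta>1 \<beta>2 n v 0) (at_right 0)"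
    by (rule tendsto_mono[OF at_le[OF subset_UNIV]])
  then show ?thesis by (simp add: kfun0)
qed

definition t0f :: "real \<Rightarrow> real \<Rightarrow> real \<Rightarrow> real" where
  "t0f \<alpha> \<beta>1 \<beta>2 = 1 / (2 * (1 + \<beta>1 + \<bar>\<alpha>\<bar> * \<bar>\<beta>2\<bar>))"

definition Mf :: "real \<Rightarrow> real \<Rightarrow> real \<Rightarrow> nat \<Rightarrow> real" where
  "Mf \<alpha> \<beta>1 \<beta>2 n = real n * \<beta>1 * 2 ^ (n - 1) + 2 ^ (n + 1) * (\<beta>1 / (- \<alpha>) + \<bar>\<beta>2\<bar>)"

lemma t0f_pos: "\<beta>1 \<ge> 0 \<Longrightarrow> t0f \<alpha> \<beta>1 \<beta>2 > 0"
  unfolding t0f_def by (simp add: add_pos_nonneg)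

lemma lin_aux: "(X::real) = 1 - A - B + D \<Longrightarrow> B \<le> 0 \<Longrightarrow> -C \<le> D \<Longrightarrow> C \<le> 1/2 \<Longrightarrow> A \<le> 0 \<Longrightarrow> (1 - A)/2 \<le> X"
proof -
  assume "X = 1 - A - B + D" "B \<le> 0" "-C \<le> D" "C \<le> 1/2" "A \<le> 0"
  then have "1 - A \<le> 2 * X" by linarith
  then show ?thesis by (simp add: field_simps)
qed

lemma w_lower:
  assumes "\<alpha> < 0" "\<beta>1 \<ge> 0" "v \<ge> 0" "0 \<le> t" "t \<le> t0f \<alpha> \<beta>1 \<beta>2"
  shows "1 - \<alpha> * ((1 + \<beta>1 * t) * v - \<beta>2 * t) \<ge> (1 - \<alpha> * v) / 2"
    and "\<beta>1 * t \<le> 1/2"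
proof -
  have "\<bar>\<alpha>\<bar> * \<bar>\<beta>2\<bar> \<ge> 0" by simp
  then have D: "2 * (1 + \<beta>1 + \<bar>\<alpha>\<bar> * \<bar>\<beta>2\<bar>) > 0" using assms(2) by (smt (verit))
  have "t * (2 * (1 + \<beta>1 + \<bar>\<alpha>\<bar> * \<bar>\<beta>2\<bar>)) \<le> 1"
    using assms(5) D unfolding t0f_def by (simp add: field_simps)
  then have A: "2 * t + 2 * (\<beta>1 * t) + 2 * (\<bar>\<alpha>\<bar> * \<bar>\<beta>2\<bar> * t) \<le> 1" by (simp add: algebra_simps)
  have B1: "\<beta>1 * t \<ge> 0" "\<bar>\<alpha>\<bar> * \<bar>\<beta>2\<bar> * t \<ge> 0" using assms(2,4) by (auto simp del: abs_mult)
  show "\<beta>1 * t \<le> 1/2" using A B1 assms(4) by linarith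
  have ab: "\<bar>\<alpha>\<bar> * \<bar>\<beta>2\<bar> * t \<le> 1/2" using A B1 assms(4) by linarith
  have "\<alpha> * \<beta>1 * t * v \<le> 0" using assms by (simp add: mult_nonpos_nonneg mult_nonneg_nonneg)
  moreover have "\<alpha> * \<beta>2 * t \<ge> - (\<bar>\<alpha>\<bar> * \<bar>\<beta>2\<bar> * t)"
  proof -
    have "\<bar>\<alpha> * \<beta>2 * t\<bar> = \<bar>\<alpha>\<bar> * \<bar>\<beta>2\<bar> * t" using assms(4) by (simp add: abs_mult)
    then show ?thesis by (metis abs_ge_minus_self minus_le_iff)
  qed
  moreover have "\<alpha> * v \<le> 0" using assms by (simp add: mult_nonpos_nonneg)
  moreover have e: "1 - \<alpha> * ((1 + \<beta>1 * t) * v - \<beta>2 * t) = 1 - \<alpha> * v - \<alpha> * \<beta>1 * t * v + \<alpha> * \<beta>2 * t"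
    by (simp add: algebra_simps)
  ultimately show "1 - \<alpha> * ((1 + \<beta>1 * t) * v - \<beta>2 * t) \<ge> (1 - \<alpha> * v) / 2"
    using ab lin_aux by metis
qed


lemma kder_bound:
  assumes a: "\<alpha> < 0" "\<beta>1 \<ge> 0" "v \<ge> 0" "0 \<le> \<tau>" "\<tau> \<le> t0f \<alpha> \<beta>1 \<beta>2"
  shows "\<bar>kder \<alpha> \<beta>1 \<beta>2 n v \<tau>\<bar> \<le> Mf \<alpha> \<beta>1 \<beta>2 n * ((1 - \<alpha> * v) / 2) powr (1 / \<alpha>)"
proof -
  define P where "P = 1 + \<beta>1 * \<tau>"
  define w where "w = 1 - \<alpha> * ((1 + \<beta>1 * \<tau>) * v - \<beta>2 * \<tau>)"
  define X where "X = 1 - \<alpha> * v"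
  define Y where "Y = (X / 2) powr (1 / \<alpha>)"
  define K where "K = \<beta>1 / (- \<alpha>) + \<bar>\<beta>2\<bar>"
  have X1: "X \<ge> 1" unfolding X_def using a by (simp add: mult_nonpos_nonneg)
  have wX: "w \<ge> X / 2" unfolding w_def X_def using w_lower(1)[OF a] .
  have P1: "P \<ge> 1" "P \<le> 2" unfolding P_def using w_lower(2)[OF a] a by (auto simp: mult_nonneg_nonneg)
  have ia: "1 / \<alpha> \<le> 0" "1 / \<alpha> - 1 \<le> 0" using a by (auto simp: divide_nonpos_neg)
  have h1: "w powr (1 / \<alpha>) \<le> Y" unfolding Y_def by (rule powr_mono2'[OF ia(1)]) (use X1 wX in auto)
  have h2: "w powr (1 / \<alpha> - 1) \<le> (X / 2) powr (1 / \<alpha> - 1)" by (rule powr_mono2'[OF ia(2)]) (use X1 wX in auto)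
  have h3: "\<bar>\<beta>1 * v - \<beta>2\<bar> \<le> K * X"
  proof -
    have "\<beta>1 * v = (\<beta>1 / (- \<alpha>)) * (- \<alpha> * v)" using a by (simp add: field_simps)
    also have "\<dots> \<le> (\<beta>1 / (- \<alpha>)) * X" unfolding X_def
      using a by (intro mult_left_mono) (auto simp: divide_nonneg_neg)
    finally have "\<beta>1 * v \<le> (\<beta>1 / (- \<alpha>)) * X" .
    moreover have "\<bar>\<beta>2\<bar> \<le> \<bar>\<beta>2\<bar> * X" using X1 by (simp add: mult_le_cancel_left1)
    moreover have "\<beta>1 * v \<ge> 0" using a by simp
    moreover have "\<bar>\<beta>1 * v - \<beta>2\<bar> \<le> \<beta>1 * v + \<bar>\<beta>2\<bar>"
      using \<open>\<beta>1 * v \<ge> 0\<close> abs_triangle_ineq4[of "\<beta>1 * v" \<beta>2] by simp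
    moreover have "K * X = (\<beta>1 / (- \<alpha>)) * X + \<bar>\<beta>2\<bar> * X" unfolding K_def by (simp add: algebra_simps)
    ultimately show ?thesis by linarith
  qed
  have h4: "(X / 2) powr (1 / \<alpha> - 1) * X = 2 * Y"
  proof -
    have "Y = (X / 2) powr (1 / \<alpha> - 1 + 1)" unfolding Y_def by simp
    also have "\<dots> = (X / 2) powr (1 / \<alpha> - 1) * (X / 2) powr 1" by (rule powr_add)
    also have "(X / 2) powr 1 = X / 2" using X1 by simp
    finally have "Y = (X / 2) powr (1 / \<alpha> - 1) * (X / 2)" .
    then show ?thesis by simp
  qed
  have Y0: "Y \<ge> 0" unfolding Y_def by simp
  have "\<beta>1 / (- \<alpha>) \<ge> 0" using a by (simp add: divide_nonneg_neg)
  then have K0: "K \<ge> 0" unfolding K_def by (simp del: minus_divide_right divide_minus_right)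
  have kd: "kder \<alpha> \<beta>1 \<beta>2 n v \<tau> = real n * P ^ (n - 1) * \<beta>1 * w powr (1 / \<alpha>) - P ^ n * w powr (1 / \<alpha> - 1) * (\<beta>1 * v - \<beta>2)"
    unfolding kder_def P_def w_def using a by (simp add: field_simps)
  have "\<bar>kder \<alpha> \<beta>1 \<beta>2 n v \<tau>\<bar> \<le> real n * P ^ (n - 1) * \<beta>1 * w powr (1 / \<alpha>) + P ^ n * w powr (1 / \<alpha> - 1) * \<bar>\<beta>1 * v - \<beta>2\<bar>"
    unfolding kd using P1 a by (auto intro!: order.trans[OF abs_triangle_ineq4] simp: abs_mult)
  also have "\<dots> \<le> real n * 2 ^ (n - 1) * \<beta>1 * Y + 2 ^ n * (X / 2) powr (1 / \<alpha> - 1) * (K * X)"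
  proof (intro add_mono mult_mono mult_left_mono h1 h2 h3 power_mono)
  qed (use P1 a Y0 K0 X1 in \<open>auto intro!: mult_nonneg_nonneg\<close>)
  also have "\<dots> = real n * 2 ^ (n - 1) * \<beta>1 * Y + 2 ^ (n + 1) * K * Y"
    using h4 by (simp add: algebra_simps)
  also have "\<dots> = Mf \<alpha> \<beta>1 \<beta>2 n * ((1 - \<alpha> * v) / 2) powr (1 / \<alpha>)"
    unfolding Mf_def Y_def X_def K_def by (simp add: algebra_simps)
  finally show ?thesis .
qed


lemma half_pos: "(1 - (a::real)) / 2 \<le> w \<Longrightarrow> a \<le> 0 \<Longrightarrow> 0 < w"
proof -
  assume "(1 - a) / 2 \<le> w" "a \<le> 0"
  then have "1 - a \<le> 2 * w" by (simp add: field_simps)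
  then show ?thesis using \<open>a \<le> 0\<close> by linarith
qed

lemma quot_bound:
  assumes a: "\<alpha> < 0" "\<beta>1 \<ge> 0" "v \<ge> 0" "0 < t" "t \<le> t0f \<alpha> \<beta>1 \<beta>2"
  shows "\<bar>(kfun \<alpha> \<beta>1 \<beta>2 n v t - hfun \<alpha> v) / t\<bar> \<le> Mf \<alpha> \<beta>1 \<beta>2 n * ((1 - \<alpha> * v) / 2) powr (1 / \<alpha>)"
proof -
  have der: "DERIV (kfun \<alpha> \<beta>1 \<beta>2 n v) x :> kder \<alpha> \<beta>1 \<beta>2 n v x" if "0 \<le> x" "x \<le> t" for x
  proof (rule kfun_deriv)
    have "1 - \<alpha> * ((1 + \<beta>1 * x) * v - \<beta>2 * x) \<ge> (1 - \<alpha> * v) / 2"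
      using w_lower(1)[of \<alpha> \<beta>1 v x \<beta>2] a that by auto
    moreover have "\<alpha> * v \<le> 0" using a by (simp add: mult_nonpos_nonneg)
    ultimately show "1 - \<alpha> * ((1 + \<beta>1 * x) * v - \<beta>2 * x) > 0" by (rule half_pos)
  qed
  from MVT2[OF a(4) der] obtain z where z: "0 < z" "z < t"
    "kfun \<alpha> \<beta>1 \<beta>2 n v t - kfun \<alpha> \<beta>1 \<beta>2 n v 0 = (t - 0) * kder \<alpha> \<beta>1 \<beta>2 n v z" by auto
  have "(kfun \<alpha> \<beta>1 \<beta>2 n v t - hfun \<alpha> v) / t = kder \<alpha> \<beta>1 \<beta>2 n v z"
    using z(3) a(4) by (simp add: kfun0)
  then show ?thesis using kder_bound[of \<alpha> \<beta>1 v z \<beta>2 n] a z by simp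
qed

lemma hat_bound:
  assumes a: "\<alpha> < 0" "\<beta>1 \<ge> 0" "v \<ge> 0" "0 \<le> t" "t \<le> t0f \<alpha> \<beta>1 \<beta>2"
  shows "\<bar>(1 - \<alpha> * ((1 + \<beta>1 * t) * v - \<beta>2 * t)) powr (1 / \<alpha>)\<bar> \<le> ((1 - \<alpha> * v) / 2) powr (1 / \<alpha>)"
proof -
  have "\<alpha> * v \<le> 0" using a by (simp add: mult_nonpos_nonneg)
  then show ?thesis using w_lower(1)[OF a] a
    by (auto intro!: powr_mono2' simp: divide_nonpos_neg)
qed

lemma hfun_bound:
  assumes a: "\<alpha> < 0" "v \<ge> 0"
  shows "\<bar>hfun \<alpha> v\<bar> \<le> ((1 - \<alpha> * v) / 2) powr (1 / \<alpha>)"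
proof -
  have "\<alpha> * v \<le> 0" using a by (simp add: mult_nonpos_nonneg)
  then show ?thesis using a unfolding hfun_def
    by (auto intro!: powr_mono2' simp: divide_nonpos_neg)
qed


lemma G_int:
  fixes q :: real
  assumes q: "q < -1"
  shows "integrable lborel (\<lambda>\<rho>. indicator {0<..} \<rho> * (1 + \<rho>) powr q)"
proof -
  have "((\<lambda>x::real. x powr q) has_integral -(1 powr (q+1)) / (q+1)) {1..}"
    by (rule has_integral_powr_to_inf) (use q in auto)
  then have "(\<lambda>x::real. x powr q) integrable_on {1..}" by blast
  then have "(\<lambda>x::real. x powr q) absolutely_integrable_on {1..}"
    by (rule nonnegative_absolutely_integrable_1) simp
  then have "integrable lebesgue (\<lambda>x::real. indicator {1..} x *\<^sub>R x powr q)"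
    unfolding set_integrable_def .
  then have i1: "integrable lborel (\<lambda>x::real. indicator {1..} x *\<^sub>R x powr q)"
    by (subst (asm) integrable_completion) auto
  have "integrable lborel (\<lambda>x::real. indicator {1..} (1 + 1 * x) *\<^sub>R (1 + 1 * x) powr q)"
    using lborel_integrable_real_affine[OF i1, of 1 1] by simp
  then show ?thesis
  proof (rule Bochner_Integration.integrable_bound)
    show "(\<lambda>\<rho>. indicator {0<..} \<rho> * (1 + \<rho>) powr q) \<in> borel_measurable lborel" by measurable
    show "AE x in lborel. norm (indicator {0<..} x * (1 + x) powr q) \<le> norm (indicator {1..} (1 + 1 * x) *\<^sub>R (1 + 1 * x) powr q)"
      by (intro AE_I2) (auto simp: indicator_def)
  qed
qed


definition hatv :: "real \<Rightarrow> real \<Rightarrow> real \<Rightarrow> real \<Rightarrow> ereal \<Rightarrow> real" where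
  "hatv \<alpha> \<beta>1 \<beta>2 t e = (if e = \<infinity> then 0 else (1 - \<alpha> * ((1 + \<beta>1 * t) * real_of_ereal e - \<beta>2 * t)) powr (1 / \<alpha>))"

definition fv :: "real \<Rightarrow> ereal \<Rightarrow> real" where
  "fv \<alpha> e = (if e = \<infinity> then 0 else hfun \<alpha> (real_of_ereal e))"

definition Kq :: "real \<Rightarrow> real \<Rightarrow> real \<Rightarrow> nat \<Rightarrow> real \<Rightarrow> ereal \<Rightarrow> real" where
  "Kq \<alpha> \<beta>1 \<beta>2 n t e = (if e = \<infinity> then 0 else (kfun \<alpha> \<beta>1 \<beta>2 n (real_of_ereal e) t - hfun \<alpha> (real_of_ereal e)) / t)"

definition K0 :: "real \<Rightarrow> real \<Rightarrow> real \<Rightarrow> nat \<Rightarrow> ereal \<Rightarrow> real" where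
  "K0 \<alpha> \<beta>1 \<beta>2 n e = (if e = \<infinity> then 0 else kder \<alpha> \<beta>1 \<beta>2 n (real_of_ereal e) 0)"

lemma hat_f_eq:
  fixes \<phi> :: "'a::euclidean_space \<Rightarrow> ereal"
  assumes "\<phi> \<in> Conv" "\<forall>x. \<phi> x \<ge> 0" "\<beta>1 \<ge> 0" "t \<ge> 0"
  shows "hat_f \<alpha> \<beta>1 \<beta>2 \<phi> t x = hatv \<alpha> \<beta>1 \<beta>2 t (\<phi> (x /\<^sub>R (1 + \<beta>1 * t)))"
proof -
  have C: "1 + \<beta>1 * t > 0" using assms by (simp add: add_pos_nonneg)
  have "hat_f \<alpha> \<beta>1 \<beta>2 \<phi> t x = alpha_fn \<alpha> (\<lambda>x. ereal (1 + \<beta>1 * t) * \<phi> (x /\<^sub>R (1 + \<beta>1 * t)) - ereal (\<beta>2 * t)) x"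
    unfolding hat_f_def using legendre_scale[OF assms(1,2) C] by simp
  also have "\<dots> = hatv \<alpha> \<beta>1 \<beta>2 t (\<phi> (x /\<^sub>R (1 + \<beta>1 * t)))"
  proof (cases "\<phi> (x /\<^sub>R (1 + \<beta>1 * t))")
    case (real v) then show ?thesis unfolding alpha_fn_def hatv_def by simp
  next
    case PInf then show ?thesis unfolding alpha_fn_def hatv_def using C by simp
  next
    case MInf
    moreover have "0 \<le> \<phi> (x /\<^sub>R (1 + \<beta>1 * t))" using assms(2) by blast
    ultimately show ?thesis by simp
  qed
  finally show ?thesis .
qed

lemma alpha_fn_eq: "alpha_fn \<alpha> \<phi> x = fv \<alpha> (\<phi> x)"
  unfolding alpha_fn_def fv_def hfun_def by simp

lemma Kq_eq: "t \<noteq> 0 \<Longrightarrow> Kq \<alpha> \<beta>1 \<beta>2 n t e = ((1 + \<beta>1 * t) ^ n * hatv \<alpha> \<beta>1 \<beta>2 t e - fv \<alpha> e) / t"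
  unfolding Kq_def hatv_def fv_def kfun_def by simp

lemma Kq_lim:
  assumes "\<alpha> < 0" "e \<ge> 0"
  shows "((\<lambda>t. Kq \<alpha> \<beta>1 \<beta>2 n t e) \<longlongrightarrow> K0 \<alpha> \<beta>1 \<beta>2 n e) (at_right 0)"
proof (cases "e = \<infinity>")
  case True then show ?thesis unfolding Kq_def K0_def by simp
next
  case False
  have "real_of_ereal e \<ge> 0" using assms(2) by (simp add: real_of_ereal_pos)
  from kfun_lim[OF assms(1) this, of \<beta>1 \<beta>2 n] show ?thesis
    unfolding Kq_def K0_def using False by simp
qed

lemma Kq_bound:
  assumes a: "\<alpha> < 0" "\<beta>1 \<ge> 0" "e \<ge> 0" "0 < t" "t \<le> t0f \<alpha> \<beta>1 \<beta>2" "e \<noteq> \<infinity>"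
  shows "\<bar>Kq \<alpha> \<beta>1 \<beta>2 n t e\<bar> \<le> Mf \<alpha> \<beta>1 \<beta>2 n * ((1 - \<alpha> * real_of_ereal e) / 2) powr (1 / \<alpha>)"
  using quot_bound[OF a(1,2) _ a(4,5), of "real_of_ereal e" n] a(3,6)
  unfolding Kq_def by (simp add: real_of_ereal_pos)

lemma hatv_bound:
  assumes a: "\<alpha> < 0" "\<beta>1 \<ge> 0" "e \<ge> 0" "0 \<le> t" "t \<le> t0f \<alpha> \<beta>1 \<beta>2" "e \<noteq> \<infinity>"
  shows "\<bar>hatv \<alpha> \<beta>1 \<beta>2 t e\<bar> \<le> ((1 - \<alpha> * real_of_ereal e) / 2) powr (1 / \<alpha>)"
  using hat_bound[OF a(1,2) _ a(4,5), of "real_of_ereal e"] a(3,6)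
  unfolding hatv_def by (simp add: real_of_ereal_pos)

lemma fv_bound:
  assumes a: "\<alpha> < 0" "e \<ge> 0" "e \<noteq> \<infinity>"
  shows "\<bar>fv \<alpha> e\<bar> \<le> ((1 - \<alpha> * real_of_ereal e) / 2) powr (1 / \<alpha>)"
  using hfun_bound[OF a(1), of "real_of_ereal e"] a
  unfolding fv_def by (simp add: real_of_ereal_pos)


lemma meas_fns[measurable]:
  "hatv \<alpha> \<beta>1 \<beta>2 t \<in> borel_measurable borel"
  "fv \<alpha> \<in> borel_measurable borel"
  "Kq \<alpha> \<beta>1 \<beta>2 n t \<in> borel_measurable borel"
  "K0 \<alpha> \<beta>1 \<beta>2 n \<in> borel_measurable borel"
  unfolding hatv_def[abs_def] fv_def[abs_def] Kq_def[abs_def] K0_def[abs_def] hfun_def kfun_def kder_def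
  by measurable

lemma decay:
  assumes a: "\<alpha> < 0" "c > 0" "R > 0" "v \<ge> 0" "\<rho> > 0" "\<rho> \<ge> R \<Longrightarrow> c * \<rho> \<le> v" "n \<ge> 1"
  shows "((1 - \<alpha> * v) / 2) powr (1 / \<alpha>) * \<rho> ^ (n - 1)
     \<le> (min (- \<alpha> * c) (1 / (1 + R)) / 2) powr (1 / \<alpha>) * (1 + \<rho>) powr (1 / \<alpha> + real n - 1)"
proof -
  define k where "k = min (- \<alpha> * c) (1 / (1 + R))"
  have kp: "k > 0" unfolding k_def using a by (simp add: mult_neg_pos)
  have av: "- \<alpha> * v \<ge> 0" using a by (simp add: mult_nonpos_nonneg)
  have kk: "k * (1 + \<rho>) \<le> 1 - \<alpha> * v"
  proof (cases "\<rho> \<ge> R")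
    case True
    have e: "k * (1 + \<rho>) = k + k * \<rho>" by (simp add: algebra_simps)
    have k1: "k \<le> 1" unfolding k_def using a by (simp add: min_le_iff_disj)
    have k2: "k * \<rho> \<le> (- \<alpha> * c) * \<rho>" unfolding k_def using a by (intro mult_right_mono) auto
    have k3: "(- \<alpha> * c) * \<rho> \<le> - \<alpha> * v" using a True by (simp add: mult.assoc mult_left_mono)
    show ?thesis using e k1 k2 k3 by linarith
  next
    case False
    have "k * (1 + \<rho>) \<le> (1 / (1 + R)) * (1 + R)" unfolding k_def using a False
      by (intro mult_mono) auto
    also have "\<dots> = 1" using a by simp
    finally show ?thesis using av by simp
  qed
  have ia: "1 / \<alpha> \<le> 0" using a by (simp add: divide_nonpos_neg)
  have "((1 - \<alpha> * v) / 2) powr (1 / \<alpha>) \<le> (k * (1 + \<rho>) / 2) powr (1 / \<alpha>)"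
    by (rule powr_mono2'[OF ia]) (use kp a kk in auto)
  also have "(k * (1 + \<rho>) / 2) = (k / 2) * (1 + \<rho>)" by simp
  also have "((k / 2) * (1 + \<rho>)) powr (1 / \<alpha>) = (k / 2) powr (1 / \<alpha>) * (1 + \<rho>) powr (1 / \<alpha>)"
    using kp a powr_mult[of "k / 2" "1 + \<rho>" "1 / \<alpha>"] by simp
  finally have h1: "((1 - \<alpha> * v) / 2) powr (1 / \<alpha>) \<le> (k / 2) powr (1 / \<alpha>) * (1 + \<rho>) powr (1 / \<alpha>)" .
  have h2: "\<rho> ^ (n - 1) \<le> (1 + \<rho>) powr (real n - 1)"
  proof -
    have "\<rho> ^ (n - 1) \<le> (1 + \<rho>) ^ (n - 1)" using a by (intro power_mono) auto
    also have "\<dots> = (1 + \<rho>) powr (real (n - 1))" using a powr_realpow[of "1 + \<rho>" "n - 1"] by simp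
    also have "real (n - 1) = real n - 1" using a by (simp add: of_nat_diff)
    finally show ?thesis .
  qed
  have "((1 - \<alpha> * v) / 2) powr (1 / \<alpha>) * \<rho> ^ (n - 1) \<le> ((k / 2) powr (1 / \<alpha>) * (1 + \<rho>) powr (1 / \<alpha>)) * (1 + \<rho>) powr (real n - 1)"
    using a by (intro mult_mono h1 h2) auto
  also have "\<dots> = (k / 2) powr (1 / \<alpha>) * (1 + \<rho>) powr (1 / \<alpha> + real n - 1)"
    by (simp add: powr_add mult.assoc add_diff_eq[symmetric])
  finally show ?thesis unfolding k_def .
qed


locale ctx13 =
  fixes \<phi> :: "'a::euclidean_space \<Rightarrow> ereal" and \<alpha> \<beta>1 \<beta>2 c R :: real
  assumes al: "\<alpha> < 0" and al2: "- 1 / real DIM('a) < \<alpha>" and b1: "\<beta>1 \<ge> 0"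
    and conv: "\<phi> \<in> Conv" and pos: "\<forall>x. \<phi> x \<ge> 0"
    and cR: "c > 0" "R > 0" "\<forall>x. norm x \<ge> R \<longrightarrow> ereal (c * norm x) \<le> \<phi> x"
begin

definition "qq = 1 / \<alpha> + real DIM('a) - 1"
definition "kap = (min (- \<alpha> * c) (1 / (1 + R)) / 2) powr (1 / \<alpha>)"
definition "Gw \<rho> = indicator {0<..} \<rho> * (kap * (1 + \<rho>) powr qq)"

lemma qq_lt: "qq < -1"
proof -
  have n: "real DIM('a) > 0" by simp
  have "- 1 < \<alpha> * real DIM('a)" using al2 n by (simp add: field_simps)
  then have "1 / \<alpha> < - real DIM('a)" using al by (simp add: field_simps)
  then show ?thesis unfolding qq_def by simp
qed

lemma kap_pos: "kap \<ge> 0" unfolding kap_def by simp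

lemma Gw_nonneg: "Gw \<rho> \<ge> 0" unfolding Gw_def using kap_pos by simp

lemma Gw_int: "integrable lborel Gw"
proof -
  have "integrable lborel (\<lambda>\<rho>. kap * (indicator {0<..} \<rho> * (1 + \<rho>) powr qq))"
    using G_int[OF qq_lt] by simp
  then show ?thesis unfolding Gw_def by (simp add: algebra_simps)
qed

lemma phi_meas[measurable]: "\<phi> \<in> borel_measurable borel"
  using conv lsc_borel unfolding Conv_def by auto

lemma ray_bound:
  assumes "norm u = 1" "\<rho> > 0" "\<phi> (\<rho> *\<^sub>R u) \<noteq> \<infinity>"
  shows "((1 - \<alpha> * real_of_ereal (\<phi> (\<rho> *\<^sub>R u))) / 2) powr (1 / \<alpha>) * \<rho> ^ (DIM('a) - 1) \<le> Gw \<rho>"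
proof -
  define v where "v = real_of_ereal (\<phi> (\<rho> *\<^sub>R u))"
  have fv: "\<phi> (\<rho> *\<^sub>R u) = ereal v" unfolding v_def using assms(3) pos ereal_fin by auto
  have v0: "v \<ge> 0" using fv pos by (metis ereal_less_eq(5))
  have vR: "c * \<rho> \<le> v" if "\<rho> \<ge> R"
  proof -
    have "norm (\<rho> *\<^sub>R u) = \<rho>" using assms by simp
    then show ?thesis using cR(3) that fv by (metis ereal_less_eq(3))
  qed
  have "((1 - \<alpha> * v) / 2) powr (1 / \<alpha>) * \<rho> ^ (DIM('a) - 1) \<le> kap * (1 + \<rho>) powr qq"
    unfolding kap_def qq_def by (rule decay[OF al cR(1,2) v0 assms(2) vR]) (auto simp: DIM_positive Suc_leI)
  then show ?thesis unfolding Gw_def v_def using assms(2) by simp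
qed

end


context ctx13
begin

lemma A_int:
  assumes "norm u = 1" "0 \<le> t" "t \<le> t0f \<alpha> \<beta>1 \<beta>2"
  shows "integrable lborel (\<lambda>\<rho>. indicator {0<..} \<rho> * (hatv \<alpha> \<beta>1 \<beta>2 t (\<phi> (\<rho> *\<^sub>R u)) * \<rho> ^ (DIM('a) - 1)))"
proof (rule Bochner_Integration.integrable_bound[OF Gw_int])
  show "(\<lambda>\<rho>. indicator {0<..} \<rho> * (hatv \<alpha> \<beta>1 \<beta>2 t (\<phi> (\<rho> *\<^sub>R u)) * \<rho> ^ (DIM('a) - 1))) \<in> borel_measurable lborel"
    by measurable
  show "AE x in lborel. norm (indicator {0<..} x * (hatv \<alpha> \<beta>1 \<beta>2 t (\<phi> (x *\<^sub>R u)) * x ^ (DIM('a) - 1))) \<le> norm (Gw x)"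
  proof (intro AE_I2)
    fix x :: real
    show "norm (indicator {0<..} x * (hatv \<alpha> \<beta>1 \<beta>2 t (\<phi> (x *\<^sub>R u)) * x ^ (DIM('a) - 1))) \<le> norm (Gw x)"
    proof (cases "x > 0 \<and> \<phi> (x *\<^sub>R u) \<noteq> \<infinity>")
      case True
      have "\<bar>hatv \<alpha> \<beta>1 \<beta>2 t (\<phi> (x *\<^sub>R u))\<bar> * x ^ (DIM('a) - 1) \<le> ((1 - \<alpha> * real_of_ereal (\<phi> (x *\<^sub>R u))) / 2) powr (1 / \<alpha>) * x ^ (DIM('a) - 1)"
        using True hatv_bound[OF al b1 _ assms(2,3)] pos by (intro mult_right_mono) auto
      also have "\<dots> \<le> Gw x" using ray_bound[OF assms(1)] True by auto
      finally show ?thesis using True Gw_nonneg by (simp add: abs_mult)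
    next
      case False
      then show ?thesis using Gw_nonneg by (auto simp: hatv_def)
    qed
  qed
qed

lemma B_int:
  assumes "norm u = 1"
  shows "integrable lborel (\<lambda>\<rho>. indicator {0<..} \<rho> * (fv \<alpha> (\<phi> (\<rho> *\<^sub>R u)) * \<rho> ^ (DIM('a) - 1)))"
proof (rule Bochner_Integration.integrable_bound[OF Gw_int])
  show "(\<lambda>\<rho>. indicator {0<..} \<rho> * (fv \<alpha> (\<phi> (\<rho> *\<^sub>R u)) * \<rho> ^ (DIM('a) - 1))) \<in> borel_measurable lborel"
    by measurable
  show "AE x in lborel. norm (indicator {0<..} x * (fv \<alpha> (\<phi> (x *\<^sub>R u)) * x ^ (DIM('a) - 1))) \<le> norm (Gw x)"
  proof (intro AE_I2)
    fix x :: real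
    show "norm (indicator {0<..} x * (fv \<alpha> (\<phi> (x *\<^sub>R u)) * x ^ (DIM('a) - 1))) \<le> norm (Gw x)"
    proof (cases "x > 0 \<and> \<phi> (x *\<^sub>R u) \<noteq> \<infinity>")
      case True
      have "\<bar>fv \<alpha> (\<phi> (x *\<^sub>R u))\<bar> * x ^ (DIM('a) - 1) \<le> ((1 - \<alpha> * real_of_ereal (\<phi> (x *\<^sub>R u))) / 2) powr (1 / \<alpha>) * x ^ (DIM('a) - 1)"
        using True fv_bound[OF al] pos by (intro mult_right_mono) auto
      also have "\<dots> \<le> Gw x" using ray_bound[OF assms(1)] True by auto
      finally show ?thesis using True Gw_nonneg by (simp add: abs_mult)
    next
      case False
      then show ?thesis using Gw_nonneg by (auto simp: fv_def)
    qed
  qed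
qed

lemma Kq_dom:
  assumes "norm u = 1" "0 < t" "t \<le> t0f \<alpha> \<beta>1 \<beta>2"
  shows "norm (indicator {0<..} x * (Kq \<alpha> \<beta>1 \<beta>2 DIM('a) t (\<phi> (x *\<^sub>R u)) * x ^ (DIM('a) - 1))) \<le> Mf \<alpha> \<beta>1 \<beta>2 DIM('a) * Gw x"
proof -
  have "\<beta>1 / (- \<alpha>) \<ge> 0" using al b1 by (simp add: divide_nonneg_neg)
  then have "\<beta>1 / (- \<alpha>) + \<bar>\<beta>2\<bar> \<ge> 0" by linarith
  moreover have "real DIM('a) * \<beta>1 * 2 ^ (DIM('a) - 1) \<ge> 0" using b1 by simp
  moreover have "(2::real) ^ (DIM('a) + 1) * (\<beta>1 / (- \<alpha>) + \<bar>\<beta>2\<bar>) \<ge> 0"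
    using \<open>\<beta>1 / (- \<alpha>) + \<bar>\<beta>2\<bar> \<ge> 0\<close> by (rule mult_nonneg_nonneg[rotated]) simp
  ultimately have Mf0: "Mf \<alpha> \<beta>1 \<beta>2 DIM('a) \<ge> 0" unfolding Mf_def by linarith
  show ?thesis
  proof (cases "x > 0 \<and> \<phi> (x *\<^sub>R u) \<noteq> \<infinity>")
    case True
    have "\<bar>Kq \<alpha> \<beta>1 \<beta>2 DIM('a) t (\<phi> (x *\<^sub>R u))\<bar> * x ^ (DIM('a) - 1) \<le> (Mf \<alpha> \<beta>1 \<beta>2 DIM('a) * ((1 - \<alpha> * real_of_ereal (\<phi> (x *\<^sub>R u))) / 2) powr (1 / \<alpha>)) * x ^ (DIM('a) - 1)"
      using True Kq_bound[OF al b1 _ assms(2,3)] pos by (intro mult_right_mono) auto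
    also have "\<dots> = Mf \<alpha> \<beta>1 \<beta>2 DIM('a) * (((1 - \<alpha> * real_of_ereal (\<phi> (x *\<^sub>R u))) / 2) powr (1 / \<alpha>) * x ^ (DIM('a) - 1))"
      by simp
    also have "\<dots> \<le> Mf \<alpha> \<beta>1 \<beta>2 DIM('a) * Gw x" using ray_bound[OF assms(1)] True Mf0
      by (intro mult_left_mono) auto
    finally show ?thesis using True Gw_nonneg by (simp add: abs_mult)
  next
    case False
    then show ?thesis using Gw_nonneg Mf0 by (auto simp: Kq_def)
  qed
qed

end


context ctx13
begin

lemma E_eq:
  assumes u: "norm u = 1" and t: "0 < t" "t \<le> t0f \<alpha> \<beta>1 \<beta>2"
  shows "E_fn \<alpha> \<beta>1 \<beta>2 \<phi> t u = (LBINT \<rho>:{0<..}. Kq \<alpha> \<beta>1 \<beta>2 DIM('a) t (\<phi> (\<rho> *\<^sub>R u)) * \<rho> ^ (DIM('a) - 1))"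
proof -
  define C where "C = 1 + \<beta>1 * t"
  have C: "C > 0" unfolding C_def using b1 t by (simp add: add_pos_nonneg)
  define A where "A = (\<lambda>\<rho>. indicator {0<..} \<rho> * (hatv \<alpha> \<beta>1 \<beta>2 t (\<phi> (\<rho> *\<^sub>R u)) * \<rho> ^ (DIM('a) - 1)))"
  define B where "B = (\<lambda>\<rho>. indicator {0<..} \<rho> * (fv \<alpha> (\<phi> (\<rho> *\<^sub>R u)) * \<rho> ^ (DIM('a) - 1)))"
  have iA: "integrable lborel A" unfolding A_def using A_int[OF u _ t(2)] t by simp
  have iB: "integrable lborel B" unfolding B_def using B_int[OF u] .
  have iA': "integrable lborel (\<lambda>r. A (r / C))"
    using lborel_integrable_real_affine[OF iA, of "1/C" 0] C by simp
  have intA': "(\<integral>r. A (r / C) \<partial>lborel) = C * (\<integral>\<rho>. A \<rho> \<partial>lborel)"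
    using lborel_integral_real_affine[of C "\<lambda>r. A (r / C)" 0] C by simp
  have n1: "DIM('a) \<ge> 1" by (simp add: DIM_positive Suc_leI)
  have CC: "C ^ (DIM('a) - 1) * C = C ^ DIM('a)" using n1
    by (metis Suc_diff_1 DIM_positive power_Suc2)
  have pt: "indicator {0<..} r *\<^sub>R ((hat_f \<alpha> \<beta>1 \<beta>2 \<phi> t (r *\<^sub>R u) - alpha_fn \<alpha> \<phi> (r *\<^sub>R u)) / t * r ^ (DIM('a) - 1))
      = (C ^ (DIM('a) - 1) * A (r / C) - B r) / t" for r
  proof -
    have h: "hat_f \<alpha> \<beta>1 \<beta>2 \<phi> t (r *\<^sub>R u) = hatv \<alpha> \<beta>1 \<beta>2 t (\<phi> ((r / C) *\<^sub>R u))"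
      using hat_f_eq[OF conv pos b1, of t \<alpha> \<beta>2 "r *\<^sub>R u"] t unfolding C_def by (simp add: divide_inverse_commute)
    have ind: "indicator {0<..} (r / C) = (indicator {0<..} r :: real)" using C
      by (simp add: indicator_def zero_less_divide_iff)
    have pw: "C ^ (DIM('a) - 1) * (r / C) ^ (DIM('a) - 1) = r ^ (DIM('a) - 1)" using C
      by (simp add: power_divide)
    show ?thesis unfolding A_def B_def h alpha_fn_eq ind
      using pw by (simp add: algebra_simps diff_divide_distrib)
  qed
  have "E_fn \<alpha> \<beta>1 \<beta>2 \<phi> t u = (\<integral>r. (C ^ (DIM('a) - 1) * A (r / C) - B r) / t \<partial>lborel)"
    unfolding E_fn_def set_lebesgue_integral_def pt ..
  also have "\<dots> = (C ^ (DIM('a) - 1) * (\<integral>r. A (r / C) \<partial>lborel) - (\<integral>r. B r \<partial>lborel)) / t"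
    using iA' iB by simp
  also have "\<dots> = (C ^ DIM('a) * (\<integral>r. A r \<partial>lborel) - (\<integral>r. B r \<partial>lborel)) / t"
    unfolding intA' CC[symmetric] by simp
  also have "\<dots> = (\<integral>r. (C ^ DIM('a) * A r - B r) / t \<partial>lborel)"
    using iA iB by simp
  also have "\<dots> = (LBINT \<rho>:{0<..}. Kq \<alpha> \<beta>1 \<beta>2 DIM('a) t (\<phi> (\<rho> *\<^sub>R u)) * \<rho> ^ (DIM('a) - 1))"
    unfolding set_lebesgue_integral_def
  proof (rule Bochner_Integration.integral_cong[OF refl])
    fix r :: real
    show "(C ^ DIM('a) * A r - B r) / t = indicator {0<..} r *\<^sub>R (Kq \<alpha> \<beta>1 \<beta>2 DIM('a) t (\<phi> (r *\<^sub>R u)) * r ^ (DIM('a) - 1))"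
      unfolding A_def B_def Kq_eq[of t, OF order.strict_implies_not_eq[OF t(1), symmetric]] C_def
      by (simp add: indicator_def algebra_simps diff_divide_distrib)
  qed
  finally show ?thesis .
qed

end


lemma dc_at_right:
  fixes s :: "real \<Rightarrow> 'b \<Rightarrow> real" and f w :: "'b \<Rightarrow> real"
  assumes fm: "f \<in> borel_measurable M" and wi: "integrable M w"
    and lim: "AE x in M. ((\<lambda>t. s t x) \<longlongrightarrow> f x) (at_right 0)"
    and ev: "eventually (\<lambda>t. s t \<in> borel_measurable M \<and> (AE x in M. norm (s t x) \<le> w x)) (at_right 0)"
  shows "((\<lambda>t. integral\<^sup>L M (s t)) \<longlongrightarrow> integral\<^sup>L M f) (at_right 0)"
proof -
  obtain d where d: "d > 0" "\<And>t. 0 < t \<Longrightarrow> t < d \<Longrightarrow> s t \<in> borel_measurable M \<and> (AE x in M. norm (s t x) \<le> w x)"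
    using ev unfolding eventually_at_right_field by auto
  define s' where "s' = (\<lambda>T. if T > 1 / d then s (inverse T) else (\<lambda>_. 0))"
  have evT: "eventually (\<lambda>T. T > 1 / d) at_top" by (rule eventually_gt_at_top)
  have inv: "0 < inverse T \<and> inverse T < d" if "T > 1 / d" for T :: real
  proof -
    have Tp: "T > 0" using that d by (smt (verit) divide_pos_pos)
    then have "inverse T < d" using that d by (simp add: field_simps)
    then show ?thesis using Tp by simp
  qed
  have sm: "s' T \<in> borel_measurable M" for T
    unfolding s'_def using d(2) inv by auto
  have lim': "AE x in M. ((\<lambda>T. s' T x) \<longlongrightarrow> f x) at_top"
    using lim
  proof eventually_elim
    fix x assume "((\<lambda>t. s t x) \<longlongrightarrow> f x) (at_right 0)"
    then have "((\<lambda>T. s (inverse T) x) \<longlongrightarrow> f x) at_top"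
      unfolding filterlim_at_right_to_top by simp
    then show "((\<lambda>T. s' T x) \<longlongrightarrow> f x) at_top"
    proof (rule Lim_transform_eventually)
      show "\<forall>\<^sub>F T in at_top. s (inverse T) x = s' T x"
        using evT by (rule eventually_mono) (simp add: s'_def)
    qed
  qed
  have bd: "\<forall>\<^sub>F T in at_top. AE x in M. norm (s' T x) \<le> w x"
    using evT by eventually_elim (use d(2) inv in \<open>auto simp: s'_def\<close>)
  have "((\<lambda>T. integral\<^sup>L M (s' T)) \<longlongrightarrow> integral\<^sup>L M f) at_top"
    by (rule integral_dominated_convergence_at_top[OF fm sm wi lim' bd])
  then have "((\<lambda>T. integral\<^sup>L M (s (inverse T))) \<longlongrightarrow> integral\<^sup>L M f) at_top"
  proof (rule Lim_transform_eventually)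
    show "\<forall>\<^sub>F T in at_top. integral\<^sup>L M (s' T) = integral\<^sup>L M (s (inverse T))"
      using evT by (rule eventually_mono) (simp add: s'_def)
  qed
  then show ?thesis unfolding filterlim_at_right_to_top by simp
qed


lemma sphere_measure_space: "space (sphere_measure :: 'a::euclidean_space measure) = sphere 0 1"
  unfolding sphere_measure_def by (simp add: space_restrict_space)

lemma sphere_measure_sets: "sets (sphere_measure :: 'a::euclidean_space measure) = sets (restrict_space borel (sphere 0 1))"
  unfolding sphere_measure_def by simp

lemma sphere_measure_finite: "finite_measure (sphere_measure :: 'a::euclidean_space measure)"
proof (rule finite_measureI)
  define D :: "'a measure" where "D = density (restrict_space lborel (ball 0 1)) (\<lambda>_. ennreal (real DIM('a)))"
  define N :: "'a measure" where "N = restrict_space borel (sphere 0 1)"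
  define g :: "'a \<Rightarrow> 'a" where "g = (\<lambda>x. x /\<^sub>R norm x)"
  have sm: "sphere_measure = distr D N g" unfolding sphere_measure_def D_def N_def g_def ..
  have "emeasure D (space D) = ennreal (real DIM('a)) * emeasure lborel (ball (0::'a) 1)"
  proof -
    have sD: "space D = ball 0 1" unfolding D_def by (simp add: space_restrict_space)
    have bs: "ball (0::'a) 1 \<in> sets (restrict_space lborel (ball 0 1))"
      by (simp add: sets_restrict_space_iff)
    have "emeasure D (ball 0 1) = (\<integral>\<^sup>+x. ennreal (real DIM('a)) * indicator (ball 0 1) x \<partial>restrict_space lborel (ball (0::'a) 1))"
      unfolding D_def by (rule emeasure_density) (use bs in auto)
    also have "\<dots> = (\<integral>\<^sup>+x. ennreal (real DIM('a)) * indicator (ball (0::'a) 1) x \<partial>lborel)"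
      by (subst nn_integral_restrict_space) (auto intro!: nn_integral_cong simp: indicator_def)
    also have "\<dots> = ennreal (real DIM('a)) * emeasure lborel (ball (0::'a) 1)"
      by (simp add: nn_integral_cmult_indicator)
    finally show ?thesis using sD by simp
  qed
  also have "\<dots> < \<infinity>" using emeasure_bounded_finite[of "ball (0::'a) 1"] by (simp add: ennreal_mult_less_top)
  finally have Dfin: "emeasure D (space D) < \<infinity>" .
  have "emeasure (sphere_measure :: 'a measure) (space sphere_measure) \<le> emeasure D (g -` space sphere_measure \<inter> space D)"
    unfolding sm distr_def emeasure_measure_of_conv by auto
  also have "\<dots> \<le> emeasure D (space D)" by (rule emeasure_space)
  finally show "emeasure (sphere_measure :: 'a measure) (space sphere_measure) \<noteq> \<infinity>" using Dfin by auto
qed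


context ctx13
begin

definition "E0 u = (LBINT \<rho>:{0<..}. K0 \<alpha> \<beta>1 \<beta>2 DIM('a) (\<phi> (\<rho> *\<^sub>R u)) * \<rho> ^ (DIM('a) - 1))"

lemma Mf0: "Mf \<alpha> \<beta>1 \<beta>2 DIM('a) \<ge> 0"
proof -
  have "\<beta>1 / (- \<alpha>) \<ge> 0" using al b1 by (simp add: divide_nonneg_neg)
  then have "\<beta>1 / (- \<alpha>) + \<bar>\<beta>2\<bar> \<ge> 0" by linarith
  moreover have "real DIM('a) * \<beta>1 * 2 ^ (DIM('a) - 1) \<ge> 0" using b1 by simp
  moreover have "(2::real) ^ (DIM('a) + 1) * (\<beta>1 / (- \<alpha>) + \<bar>\<beta>2\<bar>) \<ge> 0"
    using \<open>\<beta>1 / (- \<alpha>) + \<bar>\<beta>2\<bar> \<ge> 0\<close> by (rule mult_nonneg_nonneg[rotated]) simp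
  ultimately show ?thesis unfolding Mf_def by linarith
qed

lemma ev_t0: "eventually (\<lambda>t. 0 < t \<and> t \<le> t0f \<alpha> \<beta>1 \<beta>2) (at_right 0)"
proof -
  have "t0f \<alpha> \<beta>1 \<beta>2 > 0" using t0f_pos[OF b1] .
  then show ?thesis unfolding eventually_at_right_field
    by (intro exI[of _ "t0f \<alpha> \<beta>1 \<beta>2"]) auto
qed

lemma E_lim:
  assumes u: "norm u = 1"
  shows "((\<lambda>t. E_fn \<alpha> \<beta>1 \<beta>2 \<phi> t u) \<longlongrightarrow> E0 u) (at_right 0)"
proof -
  let ?s = "\<lambda>t \<rho>. indicator {0<..} \<rho> *\<^sub>R (Kq \<alpha> \<beta>1 \<beta>2 DIM('a) t (\<phi> (\<rho> *\<^sub>R u)) * \<rho> ^ (DIM('a) - 1))"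
  let ?f = "\<lambda>\<rho>. indicator {0<..} \<rho> *\<^sub>R (K0 \<alpha> \<beta>1 \<beta>2 DIM('a) (\<phi> (\<rho> *\<^sub>R u)) * \<rho> ^ (DIM('a) - 1))"
  have "((\<lambda>t. integral\<^sup>L lborel (?s t)) \<longlongrightarrow> integral\<^sup>L lborel ?f) (at_right 0)"
  proof (rule dc_at_right[where w="\<lambda>\<rho>. Mf \<alpha> \<beta>1 \<beta>2 DIM('a) * Gw \<rho>"])
    show "?f \<in> borel_measurable lborel" by measurable
    show "integrable lborel (\<lambda>\<rho>. Mf \<alpha> \<beta>1 \<beta>2 DIM('a) * Gw \<rho>)" using Gw_int by simp
    show "AE x in lborel. ((\<lambda>t. ?s t x) \<longlongrightarrow> ?f x) (at_right 0)"
    proof (intro AE_I2)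
      fix x :: real
      have "((\<lambda>t. Kq \<alpha> \<beta>1 \<beta>2 DIM('a) t (\<phi> (x *\<^sub>R u))) \<longlongrightarrow> K0 \<alpha> \<beta>1 \<beta>2 DIM('a) (\<phi> (x *\<^sub>R u))) (at_right 0)"
        by (rule Kq_lim[OF al]) (use pos in auto)
      then show "((\<lambda>t. ?s t x) \<longlongrightarrow> ?f x) (at_right 0)" by (intro tendsto_intros)
    qed
    show "\<forall>\<^sub>F t in at_right 0. ?s t \<in> borel_measurable lborel \<and> (AE x in lborel. norm (?s t x) \<le> Mf \<alpha> \<beta>1 \<beta>2 DIM('a) * Gw x)"
      using ev_t0
    proof eventually_elim
      case (elim t)
      then have t: "0 < t" "t \<le> t0f \<alpha> \<beta>1 \<beta>2" by auto
      have m: "?s t \<in> borel_measurable lborel" by measurable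
      have "AE x in lborel. norm (?s t x) \<le> Mf \<alpha> \<beta>1 \<beta>2 DIM('a) * Gw x"
        using Kq_dom[OF u t] by (intro AE_I2) simp
      then show ?case using m by blast
    qed
  qed
  then have "((\<lambda>t. integral\<^sup>L lborel (?s t)) \<longlongrightarrow> E0 u) (at_right 0)"
    unfolding E0_def set_lebesgue_integral_def .
  then show ?thesis
  proof (rule Lim_transform_eventually)
    show "\<forall>\<^sub>F t in at_right 0. integral\<^sup>L lborel (?s t) = E_fn \<alpha> \<beta>1 \<beta>2 \<phi> t u"
      using ev_t0 by eventually_elim (simp add: E_eq[OF u] set_lebesgue_integral_def)
  qed
qed

end


lemma to_sphere:
  fixes g :: "'a::euclidean_space \<Rightarrow> real"
  assumes "g \<in> borel_measurable borel"
  shows "g \<in> borel_measurable sphere_measure"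
  using measurable_restrict_space1[OF assms, of "sphere 0 1"]
  by (subst measurable_cong_sets[OF sphere_measure_sets refl])

context ctx13
begin

lemma Eint_meas:
  "(\<lambda>u. \<integral>\<rho>. indicator {0<..} \<rho> *\<^sub>R (Kq \<alpha> \<beta>1 \<beta>2 DIM('a) t (\<phi> (\<rho> *\<^sub>R u)) * \<rho> ^ (DIM('a) - 1)) \<partial>lborel) \<in> borel_measurable borel"
  by measurable

lemma E0_meas: "E0 \<in> borel_measurable borel"
  unfolding E0_def[abs_def] set_lebesgue_integral_def by measurable

lemma E_meas:
  assumes "0 < t" "t \<le> t0f \<alpha> \<beta>1 \<beta>2"
  shows "(\<lambda>u. E_fn \<alpha> \<beta>1 \<beta>2 \<phi> t u) \<in> borel_measurable sphere_measure"
proof -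
  have "(\<lambda>u. \<integral>\<rho>. indicator {0<..} \<rho> *\<^sub>R (Kq \<alpha> \<beta>1 \<beta>2 DIM('a) t (\<phi> (\<rho> *\<^sub>R u)) * \<rho> ^ (DIM('a) - 1)) \<partial>lborel) \<in> borel_measurable sphere_measure"
    by (rule to_sphere[OF Eint_meas])
  then show ?thesis
  proof (rule measurable_cong[THEN iffD1, rotated])
    fix u :: 'a assume "u \<in> space sphere_measure"
    then have "norm u = 1" by (simp add: sphere_measure_space)
    then show "(\<integral>\<rho>. indicator {0<..} \<rho> *\<^sub>R (Kq \<alpha> \<beta>1 \<beta>2 DIM('a) t (\<phi> (\<rho> *\<^sub>R u)) * \<rho> ^ (DIM('a) - 1)) \<partial>lborel) = E_fn \<alpha> \<beta>1 \<beta>2 \<phi> t u"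
      using E_eq[of u t] assms by (simp add: set_lebesgue_integral_def)
  qed
qed

lemma E_bound:
  assumes u: "norm u = 1" and t: "0 < t" "t \<le> t0f \<alpha> \<beta>1 \<beta>2"
  shows "norm (E_fn \<alpha> \<beta>1 \<beta>2 \<phi> t u) \<le> Mf \<alpha> \<beta>1 \<beta>2 DIM('a) * integral\<^sup>L lborel Gw"
proof -
  let ?s = "\<lambda>\<rho>. indicator {0<..} \<rho> *\<^sub>R (Kq \<alpha> \<beta>1 \<beta>2 DIM('a) t (\<phi> (\<rho> *\<^sub>R u)) * \<rho> ^ (DIM('a) - 1))"
  have iw: "integrable lborel (\<lambda>\<rho>. Mf \<alpha> \<beta>1 \<beta>2 DIM('a) * Gw \<rho>)" using Gw_int by simp
  have bd: "norm (?s x) \<le> Mf \<alpha> \<beta>1 \<beta>2 DIM('a) * Gw x" for x using Kq_dom[OF u t, of x] by simp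
  have iS: "integrable lborel ?s"
    by (rule Bochner_Integration.integrable_bound[OF iw]) (measurable, use bd Mf0 Gw_nonneg in \<open>auto intro!: AE_I2 order.trans[OF bd]\<close>)
  have "norm (integral\<^sup>L lborel ?s) \<le> (\<integral>\<rho>. Mf \<alpha> \<beta>1 \<beta>2 DIM('a) * Gw \<rho> \<partial>lborel)"
    by (rule Bochner_Integration.integral_norm_bound_integral[OF iS iw bd])
  also have "\<dots> = Mf \<alpha> \<beta>1 \<beta>2 DIM('a) * integral\<^sup>L lborel Gw" by simp
  finally show ?thesis using E_eq[OF u t] by (simp add: set_lebesgue_integral_def)
qed

theorem main:
  "(AE u in sphere_measure. \<exists>L. ((\<lambda>t. E_fn \<alpha> \<beta>1 \<beta>2 \<phi> t u) \<longlongrightarrow> L) (at_right 0))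
   \<and> ((\<lambda>t. \<integral>u. E_fn \<alpha> \<beta>1 \<beta>2 \<phi> t u \<partial>sphere_measure)
        \<longlongrightarrow> (\<integral>u. Lim (at_right 0) (\<lambda>t. E_fn \<alpha> \<beta>1 \<beta>2 \<phi> t u) \<partial>sphere_measure)) (at_right 0)"
proof
  have nu: "norm u = 1" if "u \<in> space sphere_measure" for u :: 'a
    using that by (simp add: sphere_measure_space)
  show "AE u in sphere_measure. \<exists>L. ((\<lambda>t. E_fn \<alpha> \<beta>1 \<beta>2 \<phi> t u) \<longlongrightarrow> L) (at_right 0)"
    by (intro AE_I2) (use E_lim nu in blast)
  have eqL: "(\<integral>u. Lim (at_right 0) (\<lambda>t. E_fn \<alpha> \<beta>1 \<beta>2 \<phi> t u) \<partial>sphere_measure) = (\<integral>u. E0 u \<partial>sphere_measure)"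
  proof (rule Bochner_Integration.integral_cong[OF refl])
    fix u :: 'a assume "u \<in> space sphere_measure"
    then show "Lim (at_right 0) (\<lambda>t. E_fn \<alpha> \<beta>1 \<beta>2 \<phi> t u) = E0 u"
      using E_lim[OF nu] by (intro tendsto_Lim) auto
  qed
  interpret fm: finite_measure "sphere_measure :: 'a measure" by (rule sphere_measure_finite)
  have "((\<lambda>t. \<integral>u. E_fn \<alpha> \<beta>1 \<beta>2 \<phi> t u \<partial>sphere_measure) \<longlongrightarrow> (\<integral>u. E0 u \<partial>sphere_measure)) (at_right 0)"
  proof (rule dc_at_right[where w="\<lambda>_. Mf \<alpha> \<beta>1 \<beta>2 DIM('a) * integral\<^sup>L lborel Gw"])
    show "E0 \<in> borel_measurable sphere_measure" by (rule to_sphere[OF E0_meas])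
    show "integrable sphere_measure (\<lambda>_. Mf \<alpha> \<beta>1 \<beta>2 DIM('a) * integral\<^sup>L lborel Gw)"
      by (rule finite_measure.integrable_const[OF sphere_measure_finite])
    show "AE u in sphere_measure. ((\<lambda>t. E_fn \<alpha> \<beta>1 \<beta>2 \<phi> t u) \<longlongrightarrow> E0 u) (at_right 0)"
      by (intro AE_I2) (use E_lim nu in blast)
    show "\<forall>\<^sub>F t in at_right 0. (\<lambda>u. E_fn \<alpha> \<beta>1 \<beta>2 \<phi> t u) \<in> borel_measurable sphere_measure \<and>
        (AE u in sphere_measure. norm (E_fn \<alpha> \<beta>1 \<beta>2 \<phi> t u) \<le> Mf \<alpha> \<beta>1 \<beta>2 DIM('a) * integral\<^sup>L lborel Gw)"
      using ev_t0
    proof eventually_elim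
      case (elim t)
      then have t: "0 < t" "t \<le> t0f \<alpha> \<beta>1 \<beta>2" by auto
      have "AE u in sphere_measure. norm (E_fn \<alpha> \<beta>1 \<beta>2 \<phi> t u) \<le> Mf \<alpha> \<beta>1 \<beta>2 DIM('a) * integral\<^sup>L lborel Gw"
        by (intro AE_I2) (use E_bound[OF nu t] in auto)
      then show ?case using E_meas[OF t] by blast
    qed
  qed
  then show "((\<lambda>t. \<integral>u. E_fn \<alpha> \<beta>1 \<beta>2 \<phi> t u \<partial>sphere_measure)
        \<longlongrightarrow> (\<integral>u. Lim (at_right 0) (\<lambda>t. E_fn \<alpha> \<beta>1 \<beta>2 \<phi> t u) \<partial>sphere_measure)) (at_right 0)"
    unfolding eqL .
qed

end

theorem lemma3p5:
  fixes \<phi> :: "'a::euclidean_space \<Rightarrow> ereal"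
    and \<alpha> \<beta>1 \<beta>2 :: real
  assumes "- 1 / real DIM('a) < \<alpha>" and "\<alpha> < 0"
    and "\<beta>1 \<ge> 0"
    and "\<phi> \<in> Conv" and "\<forall>x. \<phi> x \<ge> 0" and "coercive \<phi>"
    and "0 \<in> interior (Kset \<phi>)"
  shows "(AE u in sphere_measure.
            \<exists>L. ((\<lambda>t. E_fn \<alpha> \<beta>1 \<beta>2 \<phi> t u) \<longlongrightarrow> L) (at_right 0))
     \<and> ((\<lambda>t. \<integral>u. E_fn \<alpha> \<beta>1 \<beta>2 \<phi> t u \<partial>sphere_measure)
          \<longlongrightarrow> (\<integral>u. Lim (at_right 0) (\<lambda>t. E_fn \<alpha> \<beta>1 \<beta>2 \<phi> t u) \<partial>sphere_measure))
         (at_right 0)"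
proof -
  obtain c R where cR: "c > 0" "R > 0" "\<forall>x. norm x \<ge> R \<longrightarrow> ereal (c * norm x) \<le> \<phi> x"
    using coercive_bound[OF assms(6)] by blast
  interpret ctx13 \<phi> \<alpha> \<beta>1 \<beta>2 c R
    by unfold_locales (use assms cR in auto)
  show ?thesis by (rule main)
qed

end
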